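(* Let $\Gamma$ be a cocompact torsion-free Fuchsian group, $M=\mathbb{D}^2/\Gamma$, and identify $T_pM$ ($p=\pi(0)$) with $\mathbb{D}^2$ as described in the context. Then for every $i\ge1$, $$\sigma_i=\{z\in\mathbb{D}^2 : \upsilon(z)=i-1\},\qquad \mathbb{D}^2=\sigma_1\cup\mathcal{L},$$ and for every $z\in\mathbb{D}^2$, $$\iota(z)=\#\{\lambda\in\Lambda : \lambda\in D(z,r(z))\},$$ where $D(z,r(z))$ is the open hyperbolic disk of center $z$ and radius $r(z)$.
   Context: $\mathbb{D}^2$ is the open unit disk with the Poincaré metric $d$; $r(z)=d(0,z)$. $\pi:\mathbb{D}^2\to M$ is the quotient map and $\Lambda=\{\gamma(0):\gamma\in\Gamma\}$. For $\lambda\in\Lambda\setminus\{0\}$, $L_\lambda=\{z\in\mathbb{D}^2 : d(z,0)=d(z,\lambda)\}$ (the perpendicular bisector geodesic of $0$ and $\lambda$), and the web of geodesics is $\mathcal{L}=\bigcup_{\lambda\in\Lambda\setminus\{0\}}L_\lambda$. For $z\in\mathbb{D}^2$, $\rho(z)$ is the open geodesic segment from $0$ to $z$, $\iota(z)=\#\{\lambda\in\Lambda\setminus\{0\} : L_\lambda\cap\rho(z)\neq\emptyset\}$ and $\upsilon(z)=\#\{\lambda\in\Lambda\setminus\{0\}: z\in L_\lambda\}$. The exponential map $\exp_p:T_pM\to M$ is a covering isomorphic to $\pi$; we identify $T_pM$ with $\mathbb{D}^2$ so that $v\in T_pM$ corresponds to $z\in\mathbb{D}^2$ with $d(0,z)=|v|$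 and $\exp_p(v)=\pi(z)$ (via the hyperbolic exponential map at $0$). Under this identification the focal index of $z$ is $I(z)=\#\{z'\in\mathbb{D}^2 : \pi(z')=\pi(z),\ d(0,z')=d(0,z)\}$, and $\sigma_i=\{z : I(z)=i\}$ (the focal decomposition of $T_pM$). *)

theory Defs
  imports "HOL-Analysis.Analysis"
begin

definition disk :: "complex set" where
  "disk = {z. cmod z < 1}"

text \<open>Poincare distance on the unit disk (curvature -1).\<close>
definition hdist :: "complex \<Rightarrow> complex \<Rightarrow> real" where
  "hdist z w = arcosh (1 + 2 * (cmod (z - w))\<^sup>2 / ((1 - (cmod z)\<^sup>2) * (1 - (cmod w)\<^sup>2)))"

text \<open>Orientation-preserving isometries of the disk (elements of PSU(1,1)).\<close>
definition disk_aut :: "(complex \<Rightarrow> complex) \<Rightarrow> bool" where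
  "disk_aut f \<longleftrightarrow> (\<exists>a b. (cmod a)\<^sup>2 - (cmod b)\<^sup>2 = 1 \<and>
      f = (\<lambda>z. (a * z + b) / (cnj b * z + cnj a)))"

text \<open>A group of disk automorphisms (group operations checked on the disk).\<close>
definition aut_group :: "(complex \<Rightarrow> complex) set \<Rightarrow> bool" where
  "aut_group G \<longleftrightarrow> (\<forall>g\<in>G. disk_aut g) \<and> id \<in> G \<and>
     (\<forall>g\<in>G. \<forall>h\<in>G. \<exists>k\<in>G. \<forall>z\<in>disk. k z = g (h z)) \<and>
     (\<forall>g\<in>G. \<exists>k\<in>G. \<forall>z\<in>disk. k (g z) = z)"

text \<open>Fuchsian group: a discrete group of disk isometries, i.e. acting properly
  discontinuously on the disk.\<close>
definition fuchsian :: "(complex \<Rightarrow> complex) set \<Rightarrow> bool" where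
  "fuchsian G \<longleftrightarrow> aut_group G \<and>
     (\<forall>K. compact K \<and> K \<subseteq> disk \<longrightarrow> finite {g\<in>G. g ` K \<inter> K \<noteq> {}})"

definition cocompact :: "(complex \<Rightarrow> complex) set \<Rightarrow> bool" where
  "cocompact G \<longleftrightarrow> (\<exists>K. compact K \<and> K \<subseteq> disk \<and> disk \<subseteq> (\<Union>g\<in>G. g ` K))"

text \<open>Torsion-free: no non-identity element (no elliptic element) has a fixed point in the disk.\<close>
definition torsion_free :: "(complex \<Rightarrow> complex) set \<Rightarrow> bool" where
  "torsion_free G \<longleftrightarrow> (\<forall>g\<in>G. (\<exists>z\<in>disk. g z = z) \<longrightarrow> (\<forall>z\<in>disk. g z = z))"

definition Lam :: "(complex \<Rightarrow> complex) set \<Rightarrow> complex set" where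
  "Lam G = {g 0 | g. g \<in> G}"

definition bisector :: "complex \<Rightarrow> complex set" where
  "bisector l = {z \<in> disk. hdist z 0 = hdist z l}"

definition web :: "(complex \<Rightarrow> complex) set \<Rightarrow> complex set" where
  "web G = (\<Union>l \<in> Lam G - {0}. bisector l)"

text \<open>Open geodesic segment from 0 to z (a Euclidean diameter segment in the disk model).\<close>
definition rho :: "complex \<Rightarrow> complex set" where
  "rho z = open_segment 0 z"

definition iota :: "(complex \<Rightarrow> complex) set \<Rightarrow> complex \<Rightarrow> nat" where
  "iota G z = card {l \<in> Lam G - {0}. bisector l \<inter> rho z \<noteq> {}}"

definition upsilon :: "(complex \<Rightarrow> complex) set \<Rightarrow> complex \<Rightarrow> nat" where
  "upsilon G z = card {l \<in> Lam G - {0}. z \<in> bisector l}"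

definition rr :: "complex \<Rightarrow> real" where
  "rr z = hdist 0 z"

text \<open>Focal index: number of points of the disk in the same Gamma-orbit (same fibre of pi)
  and at the same distance from 0.\<close>
definition focal_index :: "(complex \<Rightarrow> complex) set \<Rightarrow> complex \<Rightarrow> nat" where
  "focal_index G z = card {z' \<in> disk. (\<exists>g\<in>G. g z' = z) \<and> hdist 0 z' = hdist 0 z}"

definition sigma :: "(complex \<Rightarrow> complex) set \<Rightarrow> nat \<Rightarrow> complex set" where
  "sigma G i = {z \<in> disk. focal_index G z = i}"

definition hdisk :: "complex \<Rightarrow> real \<Rightarrow> complex set" where
  "hdisk c r = {w \<in> disk. hdist c w < r}"

end

theory Submission
  imports Defs
begin

lemma r1: "(0::real) < 1-A \<Longrightarrow> 0 < 1-L \<Longrightarrow> (1 + 2*A/((1-A)*(1-0)) = 1 + 2*N/((1-A)*(1-L))) \<longleftrightarrow> N = A*(1-L)"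
  by (simp add: divide_simps) (auto simp: algebra_simps)
lemma r2: "(0::real) < 1-A \<Longrightarrow> 0 < 1-L \<Longrightarrow> (1 + 2*N/((1-A)*(1-L)) < 1 + 2*A/((1-A)*(1-0))) \<longleftrightarrow> N < A*(1-L)"
  by (simp add: divide_simps) (auto simp: algebra_simps)
lemma norm_ident:
  "(cmod (cnj b * u + cnj a))\<^sup>2 - (cmod (a * u + b))\<^sup>2 = ((cmod a)\<^sup>2 - (cmod b)\<^sup>2) * (1 - (cmod u)\<^sup>2)"
  unfolding cmod_power2 by (simp add: algebra_simps power2_eq_square)
lemma denom_nz:
  assumes ab: "(cmod a)\<^sup>2 - (cmod b)\<^sup>2 = 1" and u: "cmod u < 1"
  shows "cnj b * u + cnj a \<noteq> 0"
proof
  assume "cnj b * u + cnj a = 0"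
  hence "cmod a = cmod b * cmod u" by (metis add_eq_0_iff complex_mod_cnj norm_minus_cancel norm_mult)
  hence le: "cmod a \<le> cmod b" using u by (simp add: mult_left_le)
  have "(cmod a)\<^sup>2 \<le> (cmod b)\<^sup>2" using power_mono[OF le norm_ge_zero, of 2] .
  thus False using ab by linarith
qed

lemma frac_sub: "(D::complex) \<noteq> 0 \<Longrightarrow> (a*(N/D)+b)/(c*(N/D)+d) = (a*N+b*D)/(c*N+d*D)"
proof -
  assume D: "D \<noteq> 0"
  have 1: "a*(N/D)+b = (a*N+b*D)/D" and 2: "c*(N/D)+d = (c*N+d*D)/D" using D by (simp_all add: field_simps)
  show ?thesis unfolding 1 2 using D by simp
qed

lemma ratio_eq: "(Du::real) \<noteq> 0 \<Longrightarrow> Dv \<noteq> 0 \<Longrightarrow> M = N/(Du*Dv) \<Longrightarrow> p = U/Du \<Longrightarrow> q = V/Dv \<Longrightarrow> 2*M/(p*q) = 2*N/(U*V)"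
  by simp

definition mob :: "complex \<Rightarrow> complex \<Rightarrow> complex \<Rightarrow> complex" where
  "mob a b z = (a * z + b) / (cnj b * z + cnj a)"

lemma ab_complex: "(cmod a)\<^sup>2 - (cmod b)\<^sup>2 = 1 \<Longrightarrow> a * cnj a - b * cnj b = 1"
  by (metis complex_norm_square of_real_1 of_real_diff)

lemma mob_norm:
  assumes ab: "(cmod a)\<^sup>2 - (cmod b)\<^sup>2 = 1" and u: "cmod u < 1"
  shows "1 - (cmod (mob a b u))\<^sup>2 = (1 - (cmod u)\<^sup>2) / (cmod (cnj b * u + cnj a))\<^sup>2"
proof -
  have d: "cmod (cnj b * u + cnj a) \<noteq> 0" using denom_nz[OF ab u] by simp
  have "1 - (cmod (mob a b u))\<^sup>2 = ((cmod (cnj b * u + cnj a))\<^sup>2 - (cmod (a * u + b))\<^sup>2) / (cmod (cnj b * u + cnj a))\<^sup>2"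
    using d by (simp add: mob_def norm_divide power_divide field_simps)
  also have "\<dots> = (1 - (cmod u)\<^sup>2) / (cmod (cnj b * u + cnj a))\<^sup>2"
    by (simp add: norm_ident ab)
  finally show ?thesis .
qed

lemma mob_disk:
  assumes ab: "(cmod a)\<^sup>2 - (cmod b)\<^sup>2 = 1" and u: "u \<in> disk"
  shows "mob a b u \<in> disk"
proof -
  have u': "cmod u < 1" using u by (simp add: disk_def)
  have d: "cmod (cnj b * u + cnj a) \<noteq> 0" using denom_nz[OF ab u'] by simp
  have "(cmod u)\<^sup>2 < 1" using u' by (simp add: abs_square_less_1)
  hence "0 < 1 - (cmod (mob a b u))\<^sup>2" using mob_norm[OF ab u'] d by simp
  hence "(cmod (mob a b u))\<^sup>2 < 1" by simp
  thus ?thesis by (simp add: disk_def abs_square_less_1)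
qed

lemma mob_diff:
  assumes ab: "(cmod a)\<^sup>2 - (cmod b)\<^sup>2 = 1" and u: "cmod u < 1" and v: "cmod v < 1"
  shows "mob a b u - mob a b v = (u - v) / ((cnj b * u + cnj a) * (cnj b * v + cnj a))"
proof -
  have du: "cnj b * u + cnj a \<noteq> 0" and dv: "cnj b * v + cnj a \<noteq> 0"
    using denom_nz[OF ab u] denom_nz[OF ab v] by auto
  have e: "a * cnj a - b * cnj b = 1" using ab_complex[OF ab] .
  have "(a * u + b) * (cnj b * v + cnj a) - (a * v + b) * (cnj b * u + cnj a) = (a * cnj a - b * cnj b) * (u - v)"
    by (simp add: algebra_simps)
  hence "(a * u + b) * (cnj b * v + cnj a) - (a * v + b) * (cnj b * u + cnj a) = u - v" using e by simp
  thus ?thesis using du dv by (simp add: mob_def field_simps)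
qed

lemma mob_hdist:
  assumes ab: "(cmod a)\<^sup>2 - (cmod b)\<^sup>2 = 1" and u: "cmod u < 1" and v: "cmod v < 1"
  shows "hdist (mob a b u) (mob a b v) = hdist u v"
proof -
  have du: "cmod (cnj b * u + cnj a) \<noteq> 0" and dv: "cmod (cnj b * v + cnj a) \<noteq> 0"
    using denom_nz[OF ab u] denom_nz[OF ab v] by auto
  have M: "(cmod (mob a b u - mob a b v))\<^sup>2 = (cmod (u - v))\<^sup>2 / ((cmod (cnj b * u + cnj a))\<^sup>2 * (cmod (cnj b * v + cnj a))\<^sup>2)"
    by (simp add: mob_diff[OF ab u v] norm_divide norm_mult power_divide power_mult_distrib)
  have "2 * (cmod (mob a b u - mob a b v))\<^sup>2 / ((1 - (cmod (mob a b u))\<^sup>2) * (1 - (cmod (mob a b v))\<^sup>2))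
     = 2 * (cmod (u - v))\<^sup>2 / ((1 - (cmod u)\<^sup>2) * (1 - (cmod v)\<^sup>2))"
    using ratio_eq[OF _ _ M mob_norm[OF ab u] mob_norm[OF ab v]] du dv by simp
  thus ?thesis unfolding hdist_def by simp
qed

lemma mob_inv:
  assumes ab: "(cmod a)\<^sup>2 - (cmod b)\<^sup>2 = 1" and u: "cmod u < 1"
  shows "mob a b (mob (cnj a) (- b) u) = u"
proof -
  have ab': "(cmod (cnj a))\<^sup>2 - (cmod (-b))\<^sup>2 = 1" using ab by simp
  have D: "cnj (- b) * u + cnj (cnj a) \<noteq> 0" using denom_nz[OF ab' u] .
  hence D': "a - cnj b * u \<noteq> 0" by (simp add: algebra_simps)
  have e: "a * cnj a - b * cnj b = 1" using ab_complex[OF ab] .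
  have n1: "a * (cnj a * u - b) + b * (a - cnj b * u) = u"
  proof -
    have "a * (cnj a * u - b) + b * (a - cnj b * u) = (a * cnj a - b * cnj b) * u" by (simp add: algebra_simps)
    thus ?thesis using e by simp
  qed
  have n2: "cnj b * (cnj a * u - b) + cnj a * (a - cnj b * u) = 1"
  proof -
    have "cnj b * (cnj a * u - b) + cnj a * (a - cnj b * u) = a * cnj a - b * cnj b" by (simp add: algebra_simps)
    thus ?thesis using e by simp
  qed
  have m: "mob (cnj a) (- b) u = (cnj a * u - b) / (a - cnj b * u)"
    by (simp add: mob_def algebra_simps)
  have "mob a b (mob (cnj a) (- b) u) = (a * (cnj a * u - b) + b * (a - cnj b * u)) / (cnj b * (cnj a * u - b) + cnj a * (a - cnj b * u))"
    unfolding m by (subst mob_def) (rule frac_sub[OF D'])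
  also have "\<dots> = u" using n1 n2 by simp
  finally show ?thesis .
qed

lemma arcosh_eq_iff: "1 \<le> x \<Longrightarrow> 1 \<le> (y::real) \<Longrightarrow> arcosh x = arcosh y \<longleftrightarrow> x = y"
  using arcosh_less_iff_real[of x y] arcosh_less_iff_real[of y x]
  by (metis linorder_neq_iff)

lemma hdist_sym: "hdist z w = hdist w z"
  unfolding hdist_def by (simp add: norm_minus_commute mult.commute)

lemma hdist_arg_ge: "cmod z < 1 \<Longrightarrow> cmod w < 1 \<Longrightarrow>
   1 \<le> 1 + 2 * (cmod (z - w))\<^sup>2 / ((1 - (cmod z)\<^sup>2) * (1 - (cmod w)\<^sup>2))"
proof -
  assume a: "cmod z < 1" "cmod w < 1"
  have "(cmod z)\<^sup>2 < 1" "(cmod w)\<^sup>2 < 1" using a by (simp_all add: power_less_one_iff abs_square_less_1)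
  thus ?thesis by (intro add_increasing2) (auto intro!: divide_nonneg_pos)
qed

lemma hdist_bis_iff:
  assumes "w \<in> disk" "l \<in> disk"
  shows "hdist w 0 = hdist w l \<longleftrightarrow> (cmod (w - l))\<^sup>2 = (cmod w)\<^sup>2 * (1 - (cmod l)\<^sup>2)"
proof -
  have w: "(cmod w)\<^sup>2 < 1" "(cmod l)\<^sup>2 < 1" using assms by (simp_all add: disk_def abs_square_less_1)
  have "hdist w 0 = hdist w l \<longleftrightarrow> 1 + 2 * (cmod (w - 0))\<^sup>2 / ((1 - (cmod w)\<^sup>2) * (1 - (cmod 0)\<^sup>2))
     = 1 + 2 * (cmod (w - l))\<^sup>2 / ((1 - (cmod w)\<^sup>2) * (1 - (cmod l)\<^sup>2))"
    unfolding hdist_def using assms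
    by (intro arcosh_eq_iff hdist_arg_ge) (auto simp: disk_def)
  also have "\<dots> \<longleftrightarrow> (cmod (w - l))\<^sup>2 = (cmod w)\<^sup>2 * (1 - (cmod l)\<^sup>2)"
    using r1[of "(cmod w)\<^sup>2" "(cmod l)\<^sup>2" "(cmod (w - l))\<^sup>2"] w by simp
  finally show ?thesis .
qed

lemma hdist_less_iff:
  assumes "z \<in> disk" "l \<in> disk"
  shows "hdist z l < hdist 0 z \<longleftrightarrow> (cmod (z - l))\<^sup>2 < (cmod z)\<^sup>2 * (1 - (cmod l)\<^sup>2)"
proof -
  have w: "(cmod z)\<^sup>2 < 1" "(cmod l)\<^sup>2 < 1" using assms by (simp_all add: disk_def abs_square_less_1)
  have "hdist z l < hdist z 0 \<longleftrightarrow> 1 + 2 * (cmod (z - l))\<^sup>2 / ((1 - (cmod z)\<^sup>2) * (1 - (cmod l)\<^sup>2))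
     < 1 + 2 * (cmod (z - 0))\<^sup>2 / ((1 - (cmod z)\<^sup>2) * (1 - (cmod 0)\<^sup>2))"
    unfolding hdist_def using assms
    by (intro arcosh_less_iff_real hdist_arg_ge) (auto simp: disk_def)
  also have "\<dots> \<longleftrightarrow> (cmod (z - l))\<^sup>2 < (cmod z)\<^sup>2 * (1 - (cmod l)\<^sup>2)"
    using r2[of "(cmod z)\<^sup>2" "(cmod l)\<^sup>2" "(cmod (z - l))\<^sup>2"] w by simp
  finally show ?thesis by (simp add: hdist_sym)
qed




lemma quad_root:
  fixes A B C :: real
  assumes C: "C > 0" and A: "0 \<le> A" "A < C"
  shows "(\<exists>t. 0 < t \<and> t < 1 \<and> A * t\<^sup>2 - 2 * B * t + C = 0) \<longleftrightarrow> A - 2 * B + C < 0"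
proof
  assume "\<exists>t. 0 < t \<and> t < 1 \<and> A * t\<^sup>2 - 2 * B * t + C = 0"
  then obtain t where t: "0 < t" "t < 1" "A * t\<^sup>2 - 2 * B * t + C = 0" by blast
  have e: "(A - 2 * B + C) * t = (1 - t) * (A * t - C)"
  proof -
    have "(A - 2 * B + C) * t - (1 - t) * (A * t - C) = A * t\<^sup>2 - 2 * B * t + C"
      by (simp add: algebra_simps power2_eq_square)
    thus ?thesis using t(3) by simp
  qed
  have "A * t \<le> A" using t A by (simp add: mult_left_le)
  hence "(1 - t) * (A * t - C) < 0" using t A by (intro mult_pos_neg) auto
  hence "(A - 2 * B + C) * t < 0" using e by simp
  thus "A - 2 * B + C < 0" using t(1) by (meson mult_less_0_iff not_less_iff_gr_or_eq)
next
  assume n: "A - 2 * B + C < 0"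
  let ?f = "\<lambda>t::real. A * t\<^sup>2 - 2 * B * t + C"
  have c: "\<forall>x. 0 \<le> x \<and> x \<le> 1 \<longrightarrow> isCont ?f x" by (intro allI impI continuous_intros)
  have "\<exists>x. 0 \<le> x \<and> x \<le> 1 \<and> ?f x = 0"
    by (rule IVT2[OF _ _ _ c]) (use n C in simp_all)
  then obtain x where x: "0 \<le> x" "x \<le> 1" "?f x = 0" by blast
  have "x \<noteq> 0" using x C by auto
  hence x0: "0 < x" using x(1) by simp
  have "x \<noteq> 1" using x n by auto
  hence x1: "x < 1" using x(2) by simp
  show "\<exists>t. 0 < t \<and> t < 1 \<and> ?f t = 0" using x0 x1 x(3) by blast
qed

lemma bound_real:
  fixes a s d :: real
  assumes "0 \<le> a" "a < 1" "0 \<le> s" "s < 1" "s - a \<le> d" "0 \<le> d" "d\<^sup>2 = a\<^sup>2 * (1 - s\<^sup>2)"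
  shows "s \<le> max ((1 + a) / 2) (1 - (1 - a)\<^sup>2 / 8)"
proof (cases "s \<le> (1 + a) / 2")
  case True thus ?thesis by (simp add: le_max_iff_disj)
next
  case False
  hence sa: "(1 - a) / 2 \<le> s - a" by simp
  have p: "0 \<le> (1 - a) / 2" using assms by simp
  have "((1 - a) / 2)\<^sup>2 \<le> (s - a)\<^sup>2" using power_mono[OF sa p] .
  also have "\<dots> \<le> d\<^sup>2" using power_mono[OF assms(5)] sa p by simp
  also have "\<dots> \<le> 1 - s\<^sup>2"
  proof -
    have "a\<^sup>2 \<le> 1" using assms by (simp add: power_le_one)
    moreover have "0 \<le> 1 - s\<^sup>2" using assms by (simp add: power_le_one)
    ultimately show ?thesis using assms(7) by (simp add: mult_left_le_one_le)
  qed
  also have "\<dots> = (1 - s) * (1 + s)" by (simp add: power2_eq_square algebra_simps)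
  also have "\<dots> \<le> (1 - s) * 2" using assms by (intro mult_left_mono) simp_all
  also have "\<dots> = 2 * (1 - s)" by simp
  finally have "(1 - a)\<^sup>2 / 8 \<le> 1 - s" by (simp add: power_divide)
  thus ?thesis by simp
qed

lemma G_mob:
  assumes "aut_group G" "g \<in> G"
  obtains a b where "(cmod a)\<^sup>2 - (cmod b)\<^sup>2 = 1" "g = mob a b"
proof -
  have "disk_aut g" using assms unfolding aut_group_def by blast
  then obtain a b where "(cmod a)\<^sup>2 - (cmod b)\<^sup>2 = 1" "g = (\<lambda>z. (a * z + b) / (cnj b * z + cnj a))"
    unfolding disk_aut_def by blast
  moreover have "mob a b = (\<lambda>z. (a * z + b) / (cnj b * z + cnj a))" by (rule ext) (simp add: mob_def)
  ultimately show ?thesis using that by simp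
qed

lemma G_disk: "aut_group G \<Longrightarrow> g \<in> G \<Longrightarrow> u \<in> disk \<Longrightarrow> g u \<in> disk"
  by (metis G_mob mob_disk)

lemma G_hdist: "aut_group G \<Longrightarrow> g \<in> G \<Longrightarrow> u \<in> disk \<Longrightarrow> v \<in> disk \<Longrightarrow> hdist (g u) (g v) = hdist u v"
  by (metis G_mob mob_hdist disk_def mem_Collect_eq)

lemma G_surj: "aut_group G \<Longrightarrow> g \<in> G \<Longrightarrow> u \<in> disk \<Longrightarrow> \<exists>x\<in>disk. g x = u"
proof -
  assume G: "aut_group G" "g \<in> G" and u: "u \<in> disk"
  obtain a b where ab: "(cmod a)\<^sup>2 - (cmod b)\<^sup>2 = 1" "g = mob a b" using G_mob[OF G] by blast
  have ab': "(cmod (cnj a))\<^sup>2 - (cmod (-b))\<^sup>2 = 1" using ab by simp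
  show ?thesis
    using mob_disk[OF ab' u] mob_inv[OF ab(1)] u ab(2) by (auto simp: disk_def)
qed

lemma G_rinv:
  assumes "aut_group G" "g \<in> G" "\<forall>z\<in>disk. k (g z) = z" "u \<in> disk"
  shows "g (k u) = u"
proof -
  obtain x where "x \<in> disk" "g x = u" using G_surj assms by blast
  thus ?thesis using assms by auto
qed

lemma G_inv:
  assumes "aut_group G" "g \<in> G"
  obtains k where "k \<in> G" "\<forall>z\<in>disk. k (g z) = z" "\<forall>z\<in>disk. g (k z) = z"
proof -
  obtain k where k: "k \<in> G" "\<forall>z\<in>disk. k (g z) = z" using assms unfolding aut_group_def by blast
  show ?thesis using that[OF k] G_rinv[OF assms k(2)] by blast
qed

lemma agree:
  assumes G: "aut_group G" "torsion_free G" and g: "g \<in> G" and h: "h \<in> G"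
    and w: "w \<in> disk" "g w = h w" and v: "v \<in> disk"
  shows "g v = h v"
proof -
  obtain k where k: "k \<in> G" "\<forall>z\<in>disk. k (h z) = z" "\<forall>z\<in>disk. h (k z) = z"
    using G_inv[OF G(1) h] by blast
  obtain m where m: "m \<in> G" "\<forall>z\<in>disk. m z = k (g z)"
    using G(1) k(1) g unfolding aut_group_def by blast
  have "m w = w" using m k w by auto
  hence "\<forall>z\<in>disk. m z = z" using G(2) m(1) w unfolding torsion_free_def by blast
  hence "k (g v) = v" using m v by auto
  hence "h (k (g v)) = h v" by simp
  thus ?thesis using k(3) G_disk[OF G(1) g v] by simp
qed


lemma fin_U:
  assumes F: "fuchsian G" and z: "z \<in> disk"
  shows "finite {l \<in> Lam G - {0}. z \<in> bisector l}"
proof -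
  have AG: "aut_group G" using F unfolding fuchsian_def by blast
  define a where "a = cmod z"
  define \<rho> where "\<rho> = max ((1 + a) / 2) (1 - (1 - a)\<^sup>2 / 8)"
  have a: "0 \<le> a" "a < 1" using z by (auto simp: a_def disk_def)
  have r1: "\<rho> < 1"
  proof -
    have "0 < (1 - a)\<^sup>2" using a by simp
    thus ?thesis using a unfolding \<rho>_def by simp
  qed
  have r0: "0 \<le> \<rho>" unfolding \<rho>_def using a by (intro max.coboundedI1) simp
  let ?K = "cball (0::complex) \<rho>"
  have K: "compact ?K" "?K \<subseteq> disk" using r1 by (auto simp: disk_def)
  hence fin: "finite {g\<in>G. g ` ?K \<inter> ?K \<noteq> {}}" using F unfolding fuchsian_def by blast
  have "{l \<in> Lam G - {0}. z \<in> bisector l} \<subseteq> (\<lambda>g. g 0) ` {g\<in>G. g ` ?K \<inter> ?K \<noteq> {}}"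
  proof
    fix l assume l: "l \<in> {l \<in> Lam G - {0}. z \<in> bisector l}"
    then obtain g where g: "g \<in> G" "l = g 0" unfolding Lam_def by blast
    have d0: "(0::complex) \<in> disk" by (simp add: disk_def)
    have ld: "l \<in> disk" using G_disk[OF AG g(1) d0] g by simp
    have "hdist z 0 = hdist z l" using l unfolding bisector_def by blast
    hence e: "(cmod (z - l))\<^sup>2 = a\<^sup>2 * (1 - (cmod l)\<^sup>2)" using hdist_bis_iff[OF z ld] a_def by simp
    have "cmod l - a \<le> cmod (z - l)" unfolding a_def
      using norm_triangle_ineq2[of l z] by (simp add: norm_minus_commute)
    hence "cmod l \<le> \<rho>" unfolding \<rho>_def using bound_real[OF a _ _ _ _ e] ld by (simp add: disk_def)
    hence "l \<in> ?K" by simp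
    moreover have "0 \<in> ?K" using r0 by simp
    ultimately have "g ` ?K \<inter> ?K \<noteq> {}" using g by blast
    thus "l \<in> (\<lambda>g. g 0) ` {g\<in>G. g ` ?K \<inter> ?K \<noteq> {}}" using g by blast
  qed
  thus ?thesis using fin by (rule finite_subset[OF _ finite_imageI])
qed

lemma foc:
  assumes F: "fuchsian G" and TF: "torsion_free G" and z: "z \<in> disk"
  shows "focal_index G z = Suc (upsilon G z)"
proof -
  have AG: "aut_group G" using F unfolding fuchsian_def by blast
  have d0: "(0::complex) \<in> disk" by (simp add: disk_def)
  define A where "A = {z' \<in> disk. (\<exists>g\<in>G. g z' = z) \<and> hdist 0 z' = hdist 0 z}"
  define B where "B = {l \<in> Lam G. z \<in> bisector l}"
  define U where "U = {l \<in> Lam G - {0}. z \<in> bisector l}"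
  define \<phi> where "\<phi> = (\<lambda>z'. (SOME g. g \<in> G \<and> g z' = z) 0)"
  have \<phi>p: "\<exists>g\<in>G. g z' = z \<and> \<phi> z' = g 0" if "z' \<in> A" for z'
  proof -
    have "\<exists>g. g \<in> G \<and> g z' = z" using that unfolding A_def by blast
    hence "(SOME g. g \<in> G \<and> g z' = z) \<in> G \<and> (SOME g. g \<in> G \<and> g z' = z) z' = z" by (rule someI_ex)
    thus ?thesis unfolding \<phi>_def by blast
  qed
  have inj: "inj_on \<phi> A"
  proof (rule inj_onI)
    fix z1 z2 assume z1: "z1 \<in> A" and z2: "z2 \<in> A" and e: "\<phi> z1 = \<phi> z2"
    obtain g1 where g1: "g1 \<in> G" "g1 z1 = z" "\<phi> z1 = g1 0" using \<phi>p[OF z1] by blast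
    obtain g2 where g2: "g2 \<in> G" "g2 z2 = z" "\<phi> z2 = g2 0" using \<phi>p[OF z2] by blast
    have z1d: "z1 \<in> disk" and z2d: "z2 \<in> disk" using z1 z2 unfolding A_def by auto
    have "g1 z2 = g2 z2" using agree[OF AG TF g1(1) g2(1) d0 _ z2d] e g1 g2 by simp
    hence "g1 z2 = g1 z1" using g1 g2 by simp
    moreover obtain k where k: "k \<in> G" "\<forall>z\<in>disk. k (g1 z) = z" using G_inv[OF AG g1(1)] by blast
    ultimately show "z1 = z2" using z1d z2d by metis
  qed
  have img: "\<phi> ` A = B"
  proof
    show "\<phi> ` A \<subseteq> B"
    proof
      fix l assume "l \<in> \<phi> ` A"
      then obtain z' where z': "z' \<in> A" "l = \<phi> z'" by blast
      obtain g where g: "g \<in> G" "g z' = z" "\<phi> z' = g 0" using \<phi>p[OF z'(1)] by blast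
      have z'd: "z' \<in> disk" "hdist 0 z' = hdist 0 z" using z' unfolding A_def by auto
      have "hdist z (g 0) = hdist z' 0" using G_hdist[OF AG g(1) z'd(1) d0] g by simp
      hence "hdist z 0 = hdist z (g 0)" using z'd by (simp add: hdist_sym)
      moreover have "g 0 \<in> Lam G" using g unfolding Lam_def by blast
      ultimately show "l \<in> B" unfolding B_def bisector_def using z z' g by simp
    qed
  next
    show "B \<subseteq> \<phi> ` A"
    proof
      fix l assume "l \<in> B"
      then obtain g where g: "g \<in> G" "l = g 0" and hz: "hdist z 0 = hdist z (g 0)"
        unfolding B_def Lam_def bisector_def by blast
      obtain k where k: "k \<in> G" "\<forall>z\<in>disk. k (g z) = z" "\<forall>z\<in>disk. g (k z) = z"
        using G_inv[OF AG g(1)] by blast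
      define z' where "z' = k z"
      have z'd: "z' \<in> disk" unfolding z'_def using G_disk[OF AG k(1) z] .
      have gz: "g z' = z" unfolding z'_def using k(3) z by blast
      have "hdist 0 z' = hdist (g z') (g 0)" using G_hdist[OF AG g(1) z'd d0] by (simp add: hdist_sym)
      hence "hdist 0 z' = hdist 0 z" using gz hz by (simp add: hdist_sym)
      hence zA: "z' \<in> A" unfolding A_def using z'd gz g(1) by blast
      obtain h where h: "h \<in> G" "h z' = z" "\<phi> z' = h 0" using \<phi>p[OF zA] by blast
      have "h 0 = g 0" using agree[OF AG TF h(1) g(1) z'd _ d0] h gz by simp
      thus "l \<in> \<phi> ` A" using zA h g by force
    qed
  qed
  have cAB: "card A = card B" using card_image[OF inj] img by simp
  have z0: "z \<in> bisector 0" using z unfolding bisector_def by simp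
  have idG: "id \<in> G" using AG unfolding aut_group_def by blast
  have "id 0 \<in> Lam G" unfolding Lam_def using idG by blast
  hence l0: "0 \<in> Lam G" by simp
  have BU: "B = insert 0 U" unfolding B_def U_def using z0 l0 by auto
  have "finite U" unfolding U_def using fin_U[OF F z] .
  hence "card B = Suc (card U)" unfolding BU by (simp add: U_def)
  thus ?thesis using cAB unfolding focal_index_def upsilon_def A_def U_def by simp
qed

lemma seg:
  assumes z: "z \<in> disk" and l: "l \<in> disk" "l \<noteq> 0"
  shows "bisector l \<inter> rho z \<noteq> {} \<longleftrightarrow> hdist z l < hdist 0 z"
proof -
  define A where "A = (cmod z)\<^sup>2 * (cmod l)\<^sup>2"
  define Bq where "Bq = Re z * Re l + Im z * Im l"
  define C where "C = (cmod l)\<^sup>2"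
  have Fq: "(cmod (t *\<^sub>R z - l))\<^sup>2 - (cmod (t *\<^sub>R z))\<^sup>2 * (1 - (cmod l)\<^sup>2) = A * t\<^sup>2 - 2 * Bq * t + C" for t :: real
    unfolding A_def Bq_def C_def cmod_power2 by (simp add: algebra_simps power2_eq_square)
  have zl: "(cmod z)\<^sup>2 < 1" using z by (simp add: disk_def abs_square_less_1)
  have C0: "C > 0" using l unfolding C_def by simp
  have A0: "0 \<le> A" unfolding A_def by simp
  have AC: "A < C" unfolding A_def C_def using zl C0 C_def by simp
  have tzd: "t *\<^sub>R z \<in> disk" if "0 < t" "t < 1" for t :: real
  proof -
    have "cmod (t *\<^sub>R z) = t * cmod z" using that by simp
    also have "\<dots> \<le> cmod z" using that by (simp add: mult_left_le_one_le)
    finally show ?thesis using z by (simp add: disk_def)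
  qed
  have s: "w \<in> rho z \<longleftrightarrow> z \<noteq> 0 \<and> (\<exists>t. 0 < t \<and> t < 1 \<and> w = t *\<^sub>R z)" for w
    unfolding rho_def in_segment by simp
  have "bisector l \<inter> rho z \<noteq> {} \<longleftrightarrow> (z \<noteq> 0 \<and> (\<exists>t. 0 < t \<and> t < 1 \<and> t *\<^sub>R z \<in> bisector l))"
  proof
    assume "bisector l \<inter> rho z \<noteq> {}"
    then obtain w where w: "w \<in> bisector l" "w \<in> rho z" by blast
    then obtain t where "z \<noteq> 0" "0 < t" "t < 1" "w = t *\<^sub>R z" using s[of w] by blast
    thus "z \<noteq> 0 \<and> (\<exists>t. 0 < t \<and> t < 1 \<and> t *\<^sub>R z \<in> bisector l)" using w(1) by blast
  next
    assume "z \<noteq> 0 \<and> (\<exists>t. 0 < t \<and> t < 1 \<and> t *\<^sub>R z \<in> bisector l)"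
    then obtain t where t: "z \<noteq> 0" "0 < t" "t < 1" "t *\<^sub>R z \<in> bisector l" by blast
    hence "t *\<^sub>R z \<in> rho z" using s[of "t *\<^sub>R z"] by blast
    thus "bisector l \<inter> rho z \<noteq> {}" using t(4) by blast
  qed
  also have "\<dots> \<longleftrightarrow> (z \<noteq> 0 \<and> (\<exists>t. 0 < t \<and> t < 1 \<and> A * t\<^sup>2 - 2 * Bq * t + C = 0))"
  proof -
    have "t *\<^sub>R z \<in> bisector l \<longleftrightarrow> A * t\<^sup>2 - 2 * Bq * t + C = 0" if "0 < t" "t < 1" for t
      unfolding bisector_def using hdist_bis_iff[OF tzd[OF that] l(1)] tzd[OF that] Fq[of t] by auto
    thus ?thesis by blast
  qed
  also have "\<dots> \<longleftrightarrow> (z \<noteq> 0 \<and> A - 2 * Bq + C < 0)" using quad_root[OF C0 A0 AC] by simp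
  also have "\<dots> \<longleftrightarrow> A - 2 * Bq + C < 0"
  proof -
    have "z = 0 \<Longrightarrow> \<not> A - 2 * Bq + C < 0" using C0 unfolding A_def Bq_def by simp
    thus ?thesis by blast
  qed
  also have "\<dots> \<longleftrightarrow> hdist z l < hdist 0 z"
  proof -
    have "(cmod (z - l))\<^sup>2 - (cmod z)\<^sup>2 * (1 - (cmod l)\<^sup>2) = A - 2 * Bq + C" using Fq[of 1] by simp
    thus ?thesis using hdist_less_iff[OF z l(1)] by linarith
  qed
  finally show ?thesis .
qed

theorem lemma1:
  fixes G :: "(complex \<Rightarrow> complex) set"
  assumes "fuchsian G" and "cocompact G" and "torsion_free G"
  shows "(\<forall>i::nat. i \<ge> 1 \<longrightarrow> sigma G i = {z \<in> disk. upsilon G z = i - 1})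
    \<and> disk = sigma G 1 \<union> web G
    \<and> (\<forall>z\<in>disk. iota G z = card {l \<in> Lam G. l \<in> hdisk z (rr z)})"
proof (intro conjI)
  have AG: "aut_group G" using assms(1) unfolding fuchsian_def by blast
  have d0: "(0::complex) \<in> disk" by (simp add: disk_def)
  show P1: "\<forall>i::nat. i \<ge> 1 \<longrightarrow> sigma G i = {z \<in> disk. upsilon G z = i - 1}"
  proof (intro allI impI)
    fix i :: nat assume i: "i \<ge> 1"
    show "sigma G i = {z \<in> disk. upsilon G z = i - 1}"
      unfolding sigma_def using foc[OF assms(1) assms(3)] i by auto
  qed
  show "disk = sigma G 1 \<union> web G"
  proof
    show "sigma G 1 \<union> web G \<subseteq> disk" unfolding sigma_def web_def bisector_def by auto
  next
    show "disk \<subseteq> sigma G 1 \<union> web G"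
    proof
      fix z assume z: "z \<in> disk"
      show "z \<in> sigma G 1 \<union> web G"
      proof (cases "z \<in> web G")
        case False
        hence "{l \<in> Lam G - {0}. z \<in> bisector l} = {}" unfolding web_def by blast
        hence "upsilon G z = 0" unfolding upsilon_def by (metis card.empty)
        hence "z \<in> sigma G 1" using P1 z by simp
        thus ?thesis by simp
      qed simp
    qed
  qed
  show "\<forall>z\<in>disk. iota G z = card {l \<in> Lam G. l \<in> hdisk z (rr z)}"
  proof
    fix z assume z: "z \<in> disk"
    have "{l \<in> Lam G - {0}. bisector l \<inter> rho z \<noteq> {}} = {l \<in> Lam G. l \<in> hdisk z (rr z)}"
    proof (intro Collect_cong iffI)
      fix l
      assume "l \<in> Lam G - {0} \<and> bisector l \<inter> rho z \<noteq> {}"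
      moreover have "l \<in> Lam G \<Longrightarrow> l \<in> disk" using G_disk[OF AG _ d0] unfolding Lam_def by blast
      ultimately show "l \<in> Lam G \<and> l \<in> hdisk z (rr z)"
        using seg[OF z] unfolding hdisk_def rr_def by blast
    next
      fix l
      assume a: "l \<in> Lam G \<and> l \<in> hdisk z (rr z)"
      hence ld: "l \<in> disk" and lt: "hdist z l < hdist 0 z" unfolding hdisk_def rr_def by auto
      have "l \<noteq> 0" using lt by (auto simp: hdist_sym)
      thus "l \<in> Lam G - {0} \<and> bisector l \<inter> rho z \<noteq> {}" using seg[OF z ld] lt a by blast
    qed
    thus "iota G z = card {l \<in> Lam G. l \<in> hdisk z (rr z)}" unfolding iota_def by simp
  qed
qed

end
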